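(* Let $\gamma:[0,1]\to[0,1]^2$ be a continuous curve with $\gamma(0)=(0,0)$, $\gamma(1)=(1,1)$, and $\pi_2\circ\gamma\in\mathcal U$. Then for each $n\in\mathbb{N}$ there exist continuous functions $y,x_1,\ldots,x_n:[0,1]\to[0,1]$ such that, with $x_0(t)\equiv 0$: (i) $(x_i(t),\,x_{i-1}(t)+y(t))\in\gamma([0,1])$ for all $t\in[0,1]$ and all $i=1,\ldots,n$; (ii) $x_i(0)=y(0)=0$ for all $i=1,\ldots,n$; (iii) $(x_n(1),\,x_{n-1}(1)+y(1))=(1,1)$.
   Context: $\pi_2(a,b)=b$ is the projection onto the $y$-axis. A function $f:[0,1]\to\mathbb{R}$ is called piecewise monotone if there is a partition of $[0,1]$ into finitely many subintervals on each of which $f$ is strictly increasing or strictly decreasing. $\mathcal U$ denotes the set of piecewise monotone continuous functions $f:[0,1]\to[0,1]$ with the property that, for every $c\in[0,1]$, the set $f^{-1}(c)$ does not contain both a local maximum point and a local minimum point of $f$. *)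

theory Defs
  imports "HOL-Analysis.Analysis"
begin

definition strictly_increasing_on :: "real set \<Rightarrow> (real \<Rightarrow> real) \<Rightarrow> bool" where
  "strictly_increasing_on S f \<longleftrightarrow> (\<forall>u\<in>S. \<forall>v\<in>S. u < v \<longrightarrow> f u < f v)"

definition strictly_decreasing_on :: "real set \<Rightarrow> (real \<Rightarrow> real) \<Rightarrow> bool" where
  "strictly_decreasing_on S f \<longleftrightarrow> (\<forall>u\<in>S. \<forall>v\<in>S. u < v \<longrightarrow> f u > f v)"

definition piecewise_monotone :: "(real \<Rightarrow> real) \<Rightarrow> bool" where
  "piecewise_monotone f \<longleftrightarrow>
     (\<exists>(k::nat) (a::nat \<Rightarrow> real). a 0 = 0 \<and> a k = 1 \<and>
        (\<forall>j<k. a j < a (Suc j)) \<and>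
        (\<forall>j<k. strictly_increasing_on {a j..a (Suc j)} f \<or>
               strictly_decreasing_on {a j..a (Suc j)} f))"

definition local_max_point :: "(real \<Rightarrow> real) \<Rightarrow> real \<Rightarrow> bool" where
  "local_max_point f p \<longleftrightarrow> p \<in> {0..1} \<and>
     (\<exists>e>0. \<forall>q\<in>{0..1}. \<bar>q - p\<bar> < e \<longrightarrow> f q \<le> f p)"

definition local_min_point :: "(real \<Rightarrow> real) \<Rightarrow> real \<Rightarrow> bool" where
  "local_min_point f p \<longleftrightarrow> p \<in> {0..1} \<and>
     (\<exists>e>0. \<forall>q\<in>{0..1}. \<bar>q - p\<bar> < e \<longrightarrow> f p \<le> f q)"

definition class_U :: "(real \<Rightarrow> real) set" where
  "class_U = {f. piecewise_monotone f \<and> continuous_on {0..1} f \<and> f ` {0..1} \<subseteq> {0..1} \<and>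
     (\<forall>c\<in>{0..1}. \<not> ((\<exists>p\<in>{0..1}. f p = c \<and> local_max_point f p) \<and>
                        (\<exists>q\<in>{0..1}. f q = c \<and> local_min_point f q)))}"

end

theory Submission
  imports Defs
begin


definition Sset :: "(real \<Rightarrow> real) \<Rightarrow> (real \<Rightarrow> real) \<Rightarrow> (real \<times> real) set" where
  "Sset \<phi> q = {(u,v). u \<in> {0..1} \<and> v \<in> {0..1} \<and> \<phi> u = q v}"

lemma pp:
  fixes \<psi> \<phi> q :: "real \<Rightarrow> real"
  assumes "continuous_on {y0..y1} \<psi>" "\<psi> ` {y0..y1} \<subseteq> {0..1}" "\<forall>y\<in>{y0..y1}. \<phi> (\<psi> y) = y"
    "continuous_on {0..1} q" "0 \<le> s" "s \<le> t" "t \<le> 1" "q ` {s..t} \<subseteq> {y0..y1}"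
  shows "path_component (Sset \<phi> q) (\<psi> (q s), s) (\<psi> (q t), t)"
proof -
  let ?g = "\<lambda>v. (\<psi> (q v), v)"
  have cq: "continuous_on {s..t} q" using assms(4) by (rule continuous_on_subset) (use assms in auto)
  have "continuous_on {s..t} (\<psi> \<circ> q)"
    by (rule continuous_on_compose[OF cq]) (rule continuous_on_subset[OF assms(1) assms(8)])
  hence cg: "continuous_on {s..t} ?g"
    by (intro continuous_intros) (auto simp: o_def)
  have pc: "path_connected (?g ` {s..t})"
    by (rule path_connected_continuous_image[OF cg]) (simp add: convex_imp_path_connected)
  have sub: "?g ` {s..t} \<subseteq> Sset \<phi> q"
  proof
    fix z assume "z \<in> ?g ` {s..t}"
    then obtain v where v: "v \<in> {s..t}" "z = ?g v" by auto
    have "q v \<in> {y0..y1}" using assms(8) v(1) by (meson image_eqI subsetD)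
    hence "\<psi> (q v) \<in> {0..1}" using assms(2) by (meson image_eqI subsetD)
    thus "z \<in> Sset \<phi> q" using v assms(3,5,7) \<open>q v \<in> {y0..y1}\<close> by (auto simp: Sset_def)
  qed
  have "path_component (?g ` {s..t}) (?g s) (?g t)"
    using pc assms(6) unfolding path_connected_component by auto
  thus ?thesis using path_component_of_subset[OF sub] by simp
qed

lemma exists_max_le:
  fixes p :: "real \<Rightarrow> real"
  assumes "continuous_on {s..t} p" "x0 \<in> {s..t}" "p x0 \<le> c"
  shows "\<exists>x\<in>{s..t}. p x \<le> c \<and> (\<forall>y\<in>{x<..t}. c < p y)"
proof -
  let ?K = "{x\<in>{s..t}. p x \<le> c}"
  have cl: "closed ?K"
    by (rule continuous_on_closed_Collect_le[OF assms(1)]) (auto intro: continuous_intros)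
  have ne: "?K \<noteq> {}" using assms by auto
  have bd: "bdd_above ?K" by (rule bdd_aboveI[of _ t]) auto
  have m: "Sup ?K \<in> ?K" by (rule closed_contains_Sup[OF ne bd cl])
  have "\<forall>y\<in>{Sup ?K<..t}. c < p y"
  proof
    fix y assume y: "y \<in> {Sup ?K<..t}"
    show "c < p y"
    proof (rule ccontr)
      assume "\<not> c < p y"
      hence "y \<in> ?K" using y m by auto
      hence "y \<le> Sup ?K" using bd by (rule cSup_upper)
      thus False using y by auto
    qed
  qed
  thus ?thesis using m by blast
qed

lemma exists_max_ge:
  fixes p :: "real \<Rightarrow> real"
  assumes "continuous_on {s..t} p" "x0 \<in> {s..t}" "p x0 \<ge> c"
  shows "\<exists>x\<in>{s..t}. p x \<ge> c \<and> (\<forall>y\<in>{x<..t}. p y < c)"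
proof -
  have "continuous_on {s..t} (\<lambda>x. - p x)" using assms(1) by (intro continuous_intros)
  from exists_max_le[OF this assms(2), of "-c"] assms(3) show ?thesis by auto
qed

lemma exists_min_ge:
  fixes p :: "real \<Rightarrow> real"
  assumes "continuous_on {s..t} p" "x0 \<in> {s..t}" "p x0 \<ge> c"
  shows "\<exists>x\<in>{s..t}. p x \<ge> c \<and> (\<forall>y\<in>{s..<x}. p y < c)"
proof -
  let ?K = "{x\<in>{s..t}. c \<le> p x}"
  have cl: "closed ?K"
    by (rule continuous_on_closed_Collect_le[OF _ assms(1)]) (auto intro: continuous_intros)
  have ne: "?K \<noteq> {}" using assms by auto
  have bd: "bdd_below ?K" by (rule bdd_belowI[of _ s]) auto
  have m: "Inf ?K \<in> ?K" by (rule closed_contains_Inf[OF ne bd cl])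
  have "\<forall>y\<in>{s..<Inf ?K}. p y < c"
  proof
    fix y assume y: "y \<in> {s..<Inf ?K}"
    show "p y < c"
    proof (rule ccontr)
      assume "\<not> p y < c"
      hence "y \<in> ?K" using y m by auto
      hence "Inf ?K \<le> y" using bd by (rule cInf_lower)
      thus False using y by auto
    qed
  qed
  thus ?thesis using m by blast
qed

lemma exists_min_le:
  fixes p :: "real \<Rightarrow> real"
  assumes "continuous_on {s..t} p" "x0 \<in> {s..t}" "p x0 \<le> c"
  shows "\<exists>x\<in>{s..t}. p x \<le> c \<and> (\<forall>y\<in>{s..<x}. c < p y)"
proof -
  have "continuous_on {s..t} (\<lambda>x. - p x)" using assms(1) by (intro continuous_intros)
  from exists_min_ge[OF this assms(2), of "-c"] assms(3) show ?thesis by auto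
qed



lemma zlemma:
  fixes \<phi> q \<psi>1 \<psi>2 \<psi>3 :: "real \<Rightarrow> real" and B B' :: real
  assumes B: "0 \<le> B" "B < B'" "B' \<le> 1"
    and c1: "continuous_on {0..B'} \<psi>1" "\<psi>1 ` {0..B'} \<subseteq> {0..1}" "\<forall>y\<in>{0..B'}. \<phi> (\<psi>1 y) = y"
    and c2: "continuous_on {B..B'} \<psi>2" "\<psi>2 ` {B..B'} \<subseteq> {0..1}" "\<forall>y\<in>{B..B'}. \<phi> (\<psi>2 y) = y"
    and c3: "continuous_on {B..1} \<psi>3" "\<psi>3 ` {B..1} \<subseteq> {0..1}" "\<forall>y\<in>{B..1}. \<phi> (\<psi>3 y) = y"
    and e: "\<psi>1 0 = 0" "\<psi>1 B' = \<psi>2 B'" "\<psi>2 B = \<psi>3 B" "\<psi>3 1 = 1"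
    and q: "continuous_on {0..1} q" "q ` {0..1} \<subseteq> {0..1}" "q 0 = 0" "q 1 = 1"
  shows "path_component (Sset \<phi> q) (0,0) (1,1)"
proof -
  let ?S = "Sset \<phi> q"
  have qr: "\<And>v. v \<in> {0..1} \<Longrightarrow> 0 \<le> q v \<and> q v \<le> 1" using q(2) by (auto simp: image_subset_iff)
  have cqs: "\<And>s t. 0 \<le> s \<Longrightarrow> t \<le> 1 \<Longrightarrow> continuous_on {s..t} q"
    using q(1) by (rule continuous_on_subset) auto
  note P1 = pp[OF c1]
  note P2 = pp[OF c2]
  note P3 = pp[OF c3]
  have "uniformly_continuous_on {0..1} q"
    using q(1) by (rule compact_uniformly_continuous) simp
  then obtain \<delta> where d: "\<delta> > 0" "\<forall>x\<in>{0..1}. \<forall>x'\<in>{0..1}. dist x' x < \<delta> \<longrightarrow> dist (q x') (q x) < B' - B"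
    unfolding uniformly_continuous_on_def using B by (meson diff_gt_0_iff_gt)
  have sep: "\<delta> \<le> r - t" if "t \<in> {0..1}" "r \<in> {0..1}" "t \<le> r" "q t = B" "q r = B'" for t r
  proof (rule ccontr)
    assume "\<not> \<delta> \<le> r - t"
    hence "dist r t < \<delta>" using that by (simp add: dist_real_def)
    hence "dist (q r) (q t) < B' - B" using d that by blast
    thus False using that by (simp add: dist_real_def)
  qed
  have step1: "\<forall>v. 0 \<le> v \<longrightarrow> v \<le> 1 \<longrightarrow> v < real N * \<delta> \<longrightarrow> q v \<le> B \<longrightarrow> path_component ?S (0,0) (\<psi>1 (q v), v)" for N
  proof (induction N)
    case 0
    then show ?case using d by auto
  next
    case (Suc N)
    show ?case
    proof (intro allI impI)
      fix v assume v: "0 \<le> v" "v \<le> 1" "v < real (Suc N) * \<delta>" "q v \<le> B"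
      show "path_component ?S (0,0) (\<psi>1 (q v), v)"
      proof (cases "\<forall>t\<in>{0..v}. q t \<le> B'")
        case True
        have "q ` {0..v} \<subseteq> {0..B'}" using True qr v by auto
        from P1[OF q(1) _ v(1) v(2) this] show ?thesis using q(3) e(1) by simp
      next
        case False
        then obtain x0 where x0: "x0 \<in> {0..v}" "q x0 \<ge> B'" by force
        obtain t' where t': "t' \<in> {0..v}" "q t' \<ge> B'" "\<forall>y\<in>{t'<..v}. q y < B'"
          using exists_max_ge[OF cqs x0] v by auto
        have "t' < v" using t' v B by (metis atLeastAtMost_iff le_less not_le order.trans)
        obtain x where x: "t' \<le> x" "x \<le> v" "q x = B'"
          using IVT2'[of q v B' t'] t' v B cqs[of t' v] by force
        have qt': "q t' = B'" using x t' by (metis greaterThanAtMost_iff le_less less_irrefl)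
        obtain t'' where t'': "t'' \<in> {0..t'}" "q t'' \<le> B" "\<forall>y\<in>{t''<..t'}. B < q y"
          using exists_max_le[OF cqs[of 0 t'], of 0 B] t' v q(3) B by auto
        obtain x where x: "t'' \<le> x" "x \<le> t'" "q x = B"
          using IVT'[of q t'' B t'] t'' t' v B qt' cqs[of t'' t'] by force
        have qt'': "q t'' = B" using x t'' by (metis greaterThanAtMost_iff le_less less_irrefl)
        obtain r where r: "r \<in> {t''..t'}" "q r \<ge> B'" "\<forall>y\<in>{t''..<r}. q y < B'"
          using exists_min_ge[OF cqs[of t'' t'], of t' B'] t' t'' qt' v by auto
        obtain x where x: "t'' \<le> x" "x \<le> r" "q x = B'"
          using IVT'[of q t'' B' r] r t'' t' v B qt'' cqs[of t'' r] by force
        have qr': "q r = B'" using x r by (metis atLeastLessThan_iff le_less less_irrefl)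
        obtain r2 where r2: "r2 \<in> {t'..v}" "q r2 \<le> B" "\<forall>y\<in>{t'..<r2}. B < q y"
          using exists_min_le[OF cqs[of t' v], of v B] t' v by auto
        obtain x where x: "t' \<le> x" "x \<le> r2" "q x = B"
          using IVT2'[of q r2 B t'] r2 t' v B qt' cqs[of t' r2] by force
        have qr2: "q r2 = B" using x r2 by (metis atLeastLessThan_iff le_less less_irrefl)
        have "\<delta> \<le> r - t''" using sep[of t'' r] r t'' t' v qt'' qr' by auto
        hence "t'' < real N * \<delta>" using r t' v by (simp add: algebra_simps)
        hence IH: "path_component ?S (0,0) (\<psi>1 (q t''), t'')"
          using Suc.IH t'' t' v qt'' by auto
        have h1: "q y \<le> B'" if "y \<in> {t''..r}" for y
        proof (cases "y < r")
          case True then show ?thesis using bspec[OF r(3), of y] that by auto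
        next
          case False then show ?thesis using qr' that by auto
        qed
        have h2: "B \<le> q y" if "y \<in> {t''..t'}" for y
        proof (cases "y = t''")
          case True then show ?thesis using qt'' by simp
        next
          case False then show ?thesis using bspec[OF t''(3), of y] that by auto
        qed
        have h3: "B \<le> q y" if "y \<in> {t'..r2}" for y
        proof (cases "y < r2")
          case True then show ?thesis using bspec[OF r2(3), of y] that by auto
        next
          case False then show ?thesis using qr2 that by auto
        qed
        have h4: "q y \<le> B'" if "y \<in> {t'..v}" for y
        proof (cases "y = t'")
          case True then show ?thesis using qt' by simp
        next
          case False then show ?thesis using bspec[OF t'(3), of y] that by auto
        qed
        have 1: "path_component ?S (\<psi>1 (q t''), t'') (\<psi>1 (q r), r)"
        proof (rule P1[OF q(1)])
          show "q ` {t''..r} \<subseteq> {0..B'}"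
            using h1 qr r(1) t''(1) t'(1) v by (auto simp: image_subset_iff)
        qed (use t'' r t' v in auto)
        have 2: "path_component ?S (\<psi>2 (q t''), t'') (\<psi>2 (q r), r)"
        proof (rule P2[OF q(1)])
          show "q ` {t''..r} \<subseteq> {B..B'}"
            using h1 h2 r(1) by (auto simp: image_subset_iff)
        qed (use t'' r t' v in auto)
        have 3: "path_component ?S (\<psi>3 (q t''), t'') (\<psi>3 (q t'), t')"
        proof (rule P3[OF q(1)])
          show "q ` {t''..t'} \<subseteq> {B..1}"
            using h2 qr t''(1) t'(1) v by (auto simp: image_subset_iff)
        qed (use t'' r t' v in auto)
        have 4: "path_component ?S (\<psi>3 (q t'), t') (\<psi>3 (q r2), r2)"
        proof (rule P3[OF q(1)])
          show "q ` {t'..r2} \<subseteq> {B..1}"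
            using h3 qr r2(1) t'(1) v by (auto simp: image_subset_iff)
        qed (use t' r2 v in auto)
        have 5: "path_component ?S (\<psi>2 (q t'), t') (\<psi>2 (q r2), r2)"
        proof (rule P2[OF q(1)])
          show "q ` {t'..r2} \<subseteq> {B..B'}"
            using h3 h4 r2(1) by (auto simp: image_subset_iff)
        qed (use t' r2 v in auto)
        have 6: "path_component ?S (\<psi>1 (q t'), t') (\<psi>1 (q v), v)"
        proof (rule P1[OF q(1)])
          show "q ` {t'..v} \<subseteq> {0..B'}"
            using h4 qr t'(1) v by (auto simp: image_subset_iff)
        qed (use t' v in auto)
        have "path_component ?S (0,0) (\<psi>1 (q r), r)" using path_component_trans[OF IH 1] .
        also have "(\<psi>1 (q r), r) = (\<psi>2 (q r), r)" using qr' e by simp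
        finally have a: "path_component ?S (0,0) (\<psi>2 (q r), r)" .
        have "path_component ?S (0,0) (\<psi>2 (q t''), t'')" using path_component_trans[OF a path_component_sym[OF 2]] .
        also have "(\<psi>2 (q t''), t'') = (\<psi>3 (q t''), t'')" using qt'' e by simp
        finally have b: "path_component ?S (0,0) (\<psi>3 (q r2), r2)"
          using path_component_trans 3 4 by metis
        have "(\<psi>3 (q r2), r2) = (\<psi>2 (q r2), r2)" using qr2 e by simp
        with b have "path_component ?S (0,0) (\<psi>2 (q t'), t')"
          using path_component_trans path_component_sym[OF 5] by metis
        also have "(\<psi>2 (q t'), t') = (\<psi>1 (q t'), t')" using qt' e by simp
        finally show ?thesis using path_component_trans 6 by metis
      qed
    qed
  qed
  have A: "path_component ?S (0,0) (\<psi>1 (q v), v)" if "v \<in> {0..1}" "q v \<le> B" for v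
  proof -
    obtain N where "v < real N * \<delta>" using ex_less_of_nat_mult d(1) by blast
    thus ?thesis using step1[of N] that by auto
  qed
  obtain t where t: "t \<in> {0..1}" "q t \<le> B" "\<forall>y\<in>{t<..1}. B < q y"
    using exists_max_le[OF q(1), of 0 B] q(3) B by auto
  obtain x where x: "t \<le> x" "x \<le> 1" "q x = B"
    using IVT'[of q t B 1] t q B cqs[of t 1] by force
  have qt: "q t = B" using x t by (metis greaterThanAtMost_iff le_less less_irrefl)
  obtain r where r: "r \<in> {t..1}" "q r \<ge> B'" "\<forall>y\<in>{t..<r}. q y < B'"
    using exists_min_ge[OF cqs[of t 1], of 1 B'] t q B by auto
  obtain x where x: "t \<le> x" "x \<le> r" "q x = B'"
    using IVT'[of q t B' r] r t B qt cqs[of t r] by force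
  have qr': "q r = B'" using x r by (metis atLeastLessThan_iff le_less less_irrefl)
  have lowB: "B \<le> q y" if "y \<in> {t..1}" for y
  proof (cases "y = t")
    case True then show ?thesis using qt by simp
  next
    case False then show ?thesis using bspec[OF t(3), of y] that by auto
  qed
  have upB': "q y \<le> B'" if "y \<in> {t..r}" for y
  proof (cases "y < r")
    case True then show ?thesis using bspec[OF r(3), of y] that by auto
  next
    case False then show ?thesis using qr' that by auto
  qed
  have 1: "path_component ?S (\<psi>1 (q t), t) (\<psi>1 (q r), r)"
  proof (rule P1[OF q(1)])
    show "q ` {t..r} \<subseteq> {0..B'}"
      using upB' qr r(1) t(1) by (auto simp: image_subset_iff)
  qed (use t r in auto)
  have 2: "path_component ?S (\<psi>2 (q t), t) (\<psi>2 (q r), r)"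
  proof (rule P2[OF q(1)])
    show "q ` {t..r} \<subseteq> {B..B'}"
      using upB' lowB r(1) by (auto simp: image_subset_iff)
  qed (use t r in auto)
  have 3: "path_component ?S (\<psi>3 (q t), t) (\<psi>3 (q 1), 1)"
  proof (rule P3[OF q(1)])
    show "q ` {t..1} \<subseteq> {B..1}"
      using lowB qr t(1) by (auto simp: image_subset_iff)
  qed (use t in auto)
  have "path_component ?S (0,0) (\<psi>1 (q r), r)" using path_component_trans[OF A[OF t(1,2)] 1] .
  also have "(\<psi>1 (q r), r) = (\<psi>2 (q r), r)" using qr' e by simp
  finally have a: "path_component ?S (0,0) (\<psi>2 (q t), t)" using path_component_trans path_component_sym[OF 2] by metis
  also have "(\<psi>2 (q t), t) = (\<psi>3 (q t), t)" using qt e by simp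
  finally show ?thesis using path_component_trans[OF _ 3] q(4) e(4) by simp
qed



definition climbable :: "(real \<Rightarrow> real) \<Rightarrow> bool" where
  "climbable f \<longleftrightarrow> (\<forall>q. continuous_on {0..1} q \<longrightarrow> q ` {0..1} \<subseteq> {0..1} \<longrightarrow> q 0 = 0 \<longrightarrow> q 1 = 1
      \<longrightarrow> path_component (Sset f q) (0,0) (1,1))"

lemma path_component_SsetE:
  assumes "path_component (Sset f q) (0,0) (1,1)"
  obtains g :: "real \<Rightarrow> real \<times> real" where "continuous_on {0..1} g" "\<forall>r\<in>{0..1}. g r \<in> Sset f q" "g 0 = (0,0)" "g 1 = (1,1)"
proof -
  obtain g where "path g" "path_image g \<subseteq> Sset f q" "pathstart g = (0,0)" "pathfinish g = (1,1)"
    using assms unfolding path_component_def by blast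
  hence "continuous_on {0..1} g" "\<forall>r\<in>{0..1}. g r \<in> Sset f q" "g 0 = (0,0)" "g 1 = (1,1)"
    unfolding path_def path_image_def pathstart_def pathfinish_def by (auto simp: image_subset_iff)
  thus ?thesis by (rule that)
qed

lemma path_component_SsetI:
  fixes g :: "real \<Rightarrow> real \<times> real"
  assumes "continuous_on {0..1} g" "\<forall>r\<in>{0..1}. g r \<in> Sset f q" "g 0 = (0,0)" "g 1 = (1,1)"
  shows "path_component (Sset f q) (0,0) (1,1)"
  unfolding path_component_def
  by (rule exI[of _ g]) (use assms in \<open>auto simp: path_def path_image_def pathstart_def pathfinish_def\<close>)

lemma climbable_comp:
  assumes cf': "climbable f'" and cphi: "climbable \<phi>" and eq: "\<forall>u\<in>{0..1}. f u = f' (\<phi> u)"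
  shows "climbable f"
  unfolding climbable_def
proof (intro allI impI)
  fix q :: "real \<Rightarrow> real"
  assume q: "continuous_on {0..1} q" "q ` {0..1} \<subseteq> {0..1}" "q 0 = 0" "q 1 = 1"
  have "path_component (Sset f' q) (0,0) (1,1)" using cf' q unfolding climbable_def by blast
  then obtain g1 :: "real \<Rightarrow> real \<times> real" where g1: "continuous_on {0..1} g1" "\<forall>r\<in>{0..1}. g1 r \<in> Sset f' q" "g1 0 = (0,0)" "g1 1 = (1,1)"
    by (rule path_component_SsetE)
  let ?s = "\<lambda>r. fst (g1 r)"
  have s1: "continuous_on {0..1} ?s" using g1(1) by (intro continuous_intros)
  have s2: "?s ` {0..1} \<subseteq> {0..1}"
  proof
    fix z assume "z \<in> ?s ` {0..1}"
    then obtain r where r: "r \<in> {0..1}" "z = fst (g1 r)" by auto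
    obtain a b where ab: "g1 r = (a,b)" by (cases "g1 r")
    have "g1 r \<in> Sset f' q" using g1(2) r by blast
    thus "z \<in> {0..1}" using ab r by (auto simp: Sset_def)
  qed
  have s: "continuous_on {0..1} ?s" "?s ` {0..1} \<subseteq> {0..1}" "?s 0 = 0" "?s 1 = 1"
    using s1 s2 g1(3,4) by auto
  have "path_component (Sset \<phi> ?s) (0,0) (1,1)" using cphi s unfolding climbable_def by blast
  then obtain g2 :: "real \<Rightarrow> real \<times> real" where g2: "continuous_on {0..1} g2" "\<forall>r\<in>{0..1}. g2 r \<in> Sset \<phi> ?s" "g2 0 = (0,0)" "g2 1 = (1,1)"
    by (rule path_component_SsetE)
  let ?g = "\<lambda>r. (fst (g2 r), snd (g1 (snd (g2 r))))"
  have img: "(\<lambda>r. snd (g2 r)) ` {0..1} \<subseteq> {0..1}"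
  proof
    fix z assume "z \<in> (\<lambda>r. snd (g2 r)) ` {0..1}"
    then obtain r where r: "r \<in> {0..1}" "z = snd (g2 r)" by auto
    obtain a b where ab: "g2 r = (a,b)" by (cases "g2 r")
    have "g2 r \<in> Sset \<phi> ?s" using g2(2) r by blast
    thus "z \<in> {0..1}" using ab r by (auto simp: Sset_def)
  qed
  have c1: "continuous_on {0..1} (\<lambda>r. snd (g2 r))" using g2(1) by (intro continuous_intros)
  have c2: "continuous_on {0..1} (\<lambda>r. snd (g1 r))" using g1(1) by (intro continuous_intros)
  have "continuous_on {0..1} ((\<lambda>r. snd (g1 r)) \<circ> (\<lambda>r. snd (g2 r)))"
    by (rule continuous_on_compose[OF c1]) (rule continuous_on_subset[OF c2 img])
  moreover have "continuous_on {0..1} (\<lambda>r. fst (g2 r))" using g2(1) by (intro continuous_intros)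
  ultimately have cg: "continuous_on {0..1} ?g" using continuous_on_Pair unfolding o_def by blast
  have mem: "\<forall>r\<in>{0..1}. ?g r \<in> Sset f q"
  proof
    fix r :: real assume r: "r \<in> {0..1}"
    obtain u b where ub: "g2 r = (u, b)" by (cases "g2 r")
    have "g2 r \<in> Sset \<phi> ?s" using g2(2) r by blast
    hence ub2: "u \<in> {0..1}" "b \<in> {0..1}" "\<phi> u = fst (g1 b)" using ub by (auto simp: Sset_def)
    obtain u' v' where uv: "g1 b = (u', v')" by (cases "g1 b")
    have "g1 b \<in> Sset f' q" using g1(2) ub2(2) by blast
    hence uv2: "v' \<in> {0..1}" "f' u' = q v'" using uv by (auto simp: Sset_def)
    have "f u = f' (\<phi> u)" using eq ub2 by auto
    thus "?g r \<in> Sset f q" using ub ub2 uv uv2 by (auto simp: Sset_def)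
  qed
  show "path_component (Sset f q) (0,0) (1,1)"
    by (rule path_component_SsetI[OF cg mem]) (use g1 g2 in auto)
qed

lemma sect:
  fixes f :: "real \<Rightarrow> real"
  assumes "continuous_on {x..z} f" "inj_on f {x..z}"
  shows "continuous_on (f ` {x..z}) (inv_into {x..z} f)"
    "inv_into {x..z} f ` (f ` {x..z}) \<subseteq> {x..z}"
    "\<forall>y\<in>f ` {x..z}. f (inv_into {x..z} f y) = y"
    "\<forall>u\<in>{x..z}. inv_into {x..z} f (f u) = u"
proof -
  show "continuous_on (f ` {x..z}) (inv_into {x..z} f)"
    by (rule continuous_on_inv[OF assms(1)]) (use assms(2) in auto)
  show "inv_into {x..z} f ` (f ` {x..z}) \<subseteq> {x..z}" by (auto intro: inv_into_into)
  show "\<forall>y\<in>f ` {x..z}. f (inv_into {x..z} f y) = y" by (auto intro: f_inv_into_f)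
  show "\<forall>u\<in>{x..z}. inv_into {x..z} f (f u) = u" using assms(2) by (auto intro: inv_into_f_f)
qed

lemma inc_image:
  fixes f :: "real \<Rightarrow> real"
  assumes "continuous_on {x..z} f" "strictly_increasing_on {x..z} f" "x \<le> z"
  shows "f ` {x..z} = {f x..f z}" "inj_on f {x..z}"
proof -
  have mono: "f u \<le> f v" if "u \<in> {x..z}" "v \<in> {x..z}" "u \<le> v" for u v
    using assms(2) that unfolding strictly_increasing_on_def by (cases "u = v") (auto simp: le_less)
  show "f ` {x..z} = {f x..f z}"
  proof
    show "f ` {x..z} \<subseteq> {f x..f z}" using mono assms(3) by auto
    show "{f x..f z} \<subseteq> f ` {x..z}"
    proof
      fix y assume "y \<in> {f x..f z}"
      then obtain t where "x \<le> t" "t \<le> z" "f t = y" using IVT'[of f x y z] assms by auto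
      thus "y \<in> f ` {x..z}" by auto
    qed
  qed
  show "inj_on f {x..z}"
    using assms(2) unfolding inj_on_def strictly_increasing_on_def by (metis less_irrefl linorder_neqE)
qed

lemma dec_image:
  fixes f :: "real \<Rightarrow> real"
  assumes "continuous_on {x..z} f" "strictly_decreasing_on {x..z} f" "x \<le> z"
  shows "f ` {x..z} = {f z..f x}" "inj_on f {x..z}"
proof -
  have mono: "f v \<le> f u" if "u \<in> {x..z}" "v \<in> {x..z}" "u \<le> v" for u v
    using assms(2) that unfolding strictly_decreasing_on_def by (cases "u = v") (auto simp: le_less)
  show "f ` {x..z} = {f z..f x}"
  proof
    show "f ` {x..z} \<subseteq> {f z..f x}" using mono assms(3) by auto
    show "{f z..f x} \<subseteq> f ` {x..z}"
    proof
      fix y assume "y \<in> {f z..f x}"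
      then obtain t where "x \<le> t" "t \<le> z" "f t = y" using IVT2'[of f z y x] assms by auto
      thus "y \<in> f ` {x..z}" by auto
    qed
  qed
  show "inj_on f {x..z}"
    using assms(2) unfolding inj_on_def strictly_decreasing_on_def by (metis less_irrefl linorder_neqE)
qed

lemma climbable_inc:
  assumes "continuous_on {0..1} f" "strictly_increasing_on {0..1} f" "f 0 = 0" "f 1 = 1"
  shows "climbable f"
  unfolding climbable_def
proof (intro allI impI)
  fix q :: "real \<Rightarrow> real"
  assume q: "continuous_on {0..1} q" "q ` {0..1} \<subseteq> {0..1}" "q 0 = 0" "q 1 = 1"
  have im: "f ` {0..1} = {0..1}" "inj_on f {0..1}" using inc_image[OF assms(1,2)] assms(3,4) by auto
  note S = sect[OF assms(1) im(2), unfolded im(1)]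
  have "path_component (Sset f q) (inv_into {0..1} f (q 0), 0) (inv_into {0..1} f (q 1), 1)"
    by (rule pp[OF S(1,2,3) q(1)]) (use q(2) in auto)
  moreover have "inv_into {0..1} f 0 = 0" "inv_into {0..1} f 1 = 1"
    using S(4) assms(3,4) by (metis atLeastAtMost_iff order_refl zero_le_one)+
  ultimately show "path_component (Sset f q) (0,0) (1,1)" using q by simp
qed



definition pm :: "nat \<Rightarrow> (nat \<Rightarrow> real) \<Rightarrow> (real \<Rightarrow> real) \<Rightarrow> bool" where
  "pm k a f \<longleftrightarrow> a 0 = 0 \<and> a k = 1 \<and> (\<forall>j<k. a j < a (Suc j)) \<and>
        (\<forall>j<k. strictly_increasing_on {a j..a (Suc j)} f \<or> strictly_decreasing_on {a j..a (Suc j)} f)"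

lemma piecewise_monotone_pm: "piecewise_monotone f \<longleftrightarrow> (\<exists>k a. pm k a f)"
  unfolding piecewise_monotone_def pm_def by blast

lemma inc_le: "strictly_increasing_on S f \<Longrightarrow> u \<in> S \<Longrightarrow> v \<in> S \<Longrightarrow> u \<le> v \<Longrightarrow> f u \<le> f v"
  unfolding strictly_increasing_on_def by (cases "u = v") (auto simp: le_less)

lemma dec_le: "strictly_decreasing_on S f \<Longrightarrow> u \<in> S \<Longrightarrow> v \<in> S \<Longrightarrow> u \<le> v \<Longrightarrow> f v \<le> f u"
  unfolding strictly_decreasing_on_def by (cases "u = v") (auto simp: le_less)

lemma inc_subset: "strictly_increasing_on S f \<Longrightarrow> T \<subseteq> S \<Longrightarrow> strictly_increasing_on T f"
  unfolding strictly_increasing_on_def by blast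

lemma dec_subset: "strictly_decreasing_on S f \<Longrightarrow> T \<subseteq> S \<Longrightarrow> strictly_decreasing_on T f"
  unfolding strictly_decreasing_on_def by blast

lemma inc_cong: "strictly_increasing_on S f \<Longrightarrow> (\<forall>u\<in>S. g u = f u) \<Longrightarrow> strictly_increasing_on S g"
  unfolding strictly_increasing_on_def by auto

lemma dec_cong: "strictly_decreasing_on S f \<Longrightarrow> (\<forall>u\<in>S. g u = f u) \<Longrightarrow> strictly_decreasing_on S g"
  unfolding strictly_decreasing_on_def by auto

lemma inc_join:
  assumes "strictly_increasing_on {x..y} f" "strictly_increasing_on {y..z} f"
  shows "strictly_increasing_on {x..z} f"
  unfolding strictly_increasing_on_def
proof (intro ballI impI)
  fix u v assume u: "u \<in> {x..z}" and v: "v \<in> {x..z}" and uv: "u < v"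
  show "f u < f v"
  proof (cases "v \<le> y")
    case True then show ?thesis using assms(1) u v uv unfolding strictly_increasing_on_def by auto
  next
    case False
    show ?thesis
    proof (cases "u \<ge> y")
      case True then show ?thesis using assms(2) u v uv unfolding strictly_increasing_on_def by auto
    next
      case False2: False
      have "f u < f y" using assms(1) u False2 unfolding strictly_increasing_on_def by auto
      moreover have "f y < f v" using assms(2) v False False2 u unfolding strictly_increasing_on_def by auto
      ultimately show ?thesis by simp
    qed
  qed
qed

lemma dec_join:
  assumes "strictly_decreasing_on {x..y} f" "strictly_decreasing_on {y..z} f"
  shows "strictly_decreasing_on {x..z} f"
  unfolding strictly_decreasing_on_def
proof (intro ballI impI)
  fix u v assume u: "u \<in> {x..z}" and v: "v \<in> {x..z}" and uv: "u < v"
  show "f u > f v"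
  proof (cases "v \<le> y")
    case True then show ?thesis using assms(1) u v uv unfolding strictly_decreasing_on_def by auto
  next
    case False
    show ?thesis
    proof (cases "u \<ge> y")
      case True then show ?thesis using assms(2) u v uv unfolding strictly_decreasing_on_def by auto
    next
      case False2: False
      have "f u > f y" using assms(1) u False2 unfolding strictly_decreasing_on_def by auto
      moreover have "f y > f v" using assms(2) v False False2 u unfolding strictly_decreasing_on_def by auto
      ultimately show ?thesis by simp
    qed
  qed
qed

lemma mp_image:
  fixes f :: "real \<Rightarrow> real"
  assumes "continuous_on {x..z} f" "x \<le> z"
    "strictly_increasing_on {x..z} f \<or> strictly_decreasing_on {x..z} f"
  shows "f ` {x..z} = {min (f x) (f z)..max (f x) (f z)}" "inj_on f {x..z}"
proof -
  have "(f ` {x..z} = {min (f x) (f z)..max (f x) (f z)}) \<and> inj_on f {x..z}"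
  proof (cases "strictly_increasing_on {x..z} f")
    case True
    have "f x \<le> f z" using inc_le[OF True] assms(2) by auto
    then show ?thesis using inc_image[OF assms(1) True assms(2)] by auto
  next
    case False
    hence D: "strictly_decreasing_on {x..z} f" using assms(3) by auto
    have "f z \<le> f x" using dec_le[OF D] assms(2) by auto
    then show ?thesis using dec_image[OF assms(1) D assms(2)] by auto
  qed
  thus "f ` {x..z} = {min (f x) (f z)..max (f x) (f z)}" "inj_on f {x..z}" by auto
qed

lemma ivt_between:
  fixes f :: "real \<Rightarrow> real"
  assumes "continuous_on {x..z} f" "x \<le> z" "min (f x) (f z) \<le> y" "y \<le> max (f x) (f z)"
  shows "\<exists>t\<in>{x..z}. f t = y"
proof (cases "f x \<le> f z")
  case True
  then show ?thesis using IVT'[of f x y z] assms by auto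
next
  case False
  then show ?thesis using IVT2'[of f z y x] assms by auto
qed

lemma pm_lt: "pm k a f \<Longrightarrow> i < i' \<Longrightarrow> i' \<le> k \<Longrightarrow> a i < a i'"
proof (induction i')
  case 0 then show ?case by simp
next
  case (Suc i')
  have s: "a i' < a (Suc i')" using Suc.prems unfolding pm_def by auto
  show ?case
  proof (cases "i = i'")
    case True then show ?thesis using s by simp
  next
    case False then have "a i < a i'" using Suc by auto
    then show ?thesis using s by simp
  qed
qed

lemma pm_le: "pm k a f \<Longrightarrow> i \<le> i' \<Longrightarrow> i' \<le> k \<Longrightarrow> a i \<le> a i'"
  using pm_lt[of k a f i i'] by (cases "i = i'") auto

lemma pm_range: "pm k a f \<Longrightarrow> i \<le> k \<Longrightarrow> a i \<in> {0..1}"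
  using pm_le[of k a f 0 i] pm_le[of k a f i k] unfolding pm_def by auto

lemma pm_merge:
  assumes pm: "pm k a f" and j: "Suc j < k"
    and same: "(strictly_increasing_on {a j..a (Suc j)} f \<and> strictly_increasing_on {a (Suc j)..a (Suc (Suc j))} f) \<or>
               (strictly_decreasing_on {a j..a (Suc j)} f \<and> strictly_decreasing_on {a (Suc j)..a (Suc (Suc j))} f)"
  shows "pm (k - 1) (\<lambda>i. if i \<le> j then a i else a (Suc i)) f"
proof -
  let ?a = "\<lambda>i. if i \<le> j then a i else a (Suc i)"
  have A: "a 0 = 0" "a k = 1" "\<forall>j<k. a j < a (Suc j)"
    "\<forall>j<k. strictly_increasing_on {a j..a (Suc j)} f \<or> strictly_decreasing_on {a j..a (Suc j)} f"
    using pm unfolding pm_def by auto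
  have "?a (k - 1) = 1" using j A(2) by auto
  moreover have "\<forall>i<k - 1. ?a i < ?a (Suc i)"
  proof (intro allI impI)
    fix i assume i: "i < k - 1"
    show "?a i < ?a (Suc i)"
    proof (cases "i < j")
      case True then show ?thesis using A(3) j by auto
    next
      case False
      show ?thesis
      proof (cases "i = j")
        case True then show ?thesis using A(3) j by (auto intro: less_trans)
      next
        case False2: False then show ?thesis using A(3) i False by auto
      qed
    qed
  qed
  moreover have "\<forall>i<k - 1. strictly_increasing_on {?a i..?a (Suc i)} f \<or> strictly_decreasing_on {?a i..?a (Suc i)} f"
  proof (intro allI impI)
    fix i assume i: "i < k - 1"
    show "strictly_increasing_on {?a i..?a (Suc i)} f \<or> strictly_decreasing_on {?a i..?a (Suc i)} f"
    proof (cases "i < j")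
      case True then show ?thesis using A(4) j by auto
    next
      case False
      show ?thesis
      proof (cases "i = j")
        case True then show ?thesis using same inc_join dec_join by auto
      next
        case False2: False then show ?thesis using A(4) i False by auto
      qed
    qed
  qed
  ultimately show ?thesis using A(1) unfolding pm_def by auto
qed

lemma pm_cont: "pm k a f \<Longrightarrow> continuous_on {0..1} f \<Longrightarrow> i \<le> k \<Longrightarrow> i' \<le> k \<Longrightarrow> continuous_on {a i..a i'} f"
  by (rule continuous_on_subset[of "{0..1}"]) (use pm_range[of k a f i] pm_range[of k a f i'] in auto)



definition theta :: "real \<Rightarrow> real \<Rightarrow> real \<Rightarrow> real \<Rightarrow> real" where
  "theta b b' A2 u = A2 + (u - b) * ((b' - A2) / (b' - b))"

definition fcut :: "(real \<Rightarrow> real) \<Rightarrow> real \<Rightarrow> real \<Rightarrow> real \<Rightarrow> real \<Rightarrow> real" where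
  "fcut f b b' A2 u = (if u < b then f u else if u \<le> b' then f (theta b b' A2 u) else f u)"

lemma theta_b: "theta b b' A2 b = A2" by (simp add: theta_def)
lemma theta_b': "b < b' \<Longrightarrow> theta b b' A2 b' = b'" by (simp add: theta_def)

lemma theta_mono: "b < b' \<Longrightarrow> A2 < b' \<Longrightarrow> u < v \<Longrightarrow> theta b b' A2 u < theta b b' A2 v"
proof -
  assume a: "b < b'" "A2 < b'" "u < v"
  have "(u - b) * (b' - A2) < (v - b) * (b' - A2)" using a by (intro mult_strict_right_mono) auto
  then have "(u - b) * (b' - A2) / (b' - b) < (v - b) * (b' - A2) / (b' - b)" using a by (intro divide_strict_right_mono) auto
  then show ?thesis by (simp add: theta_def)
qed

lemma theta_range: "b < b' \<Longrightarrow> A2 \<le> b' \<Longrightarrow> u \<in> {b..b'} \<Longrightarrow> theta b b' A2 u \<in> {A2..b'}"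
proof -
  assume a: "b < b'" "A2 \<le> b'" "u \<in> {b..b'}"
  have q: "0 \<le> (u - b) / (b' - b)" "(u - b) / (b' - b) \<le> 1" using a by auto
  have k: "(u - b) / (b' - b) * (b' - A2) \<le> 1 * (b' - A2)" by (rule mult_right_mono) (use a q in auto)
  have k0: "0 \<le> (u - b) / (b' - b) * (b' - A2)" using a q by auto
  have eq: "(u - b) * ((b' - A2) / (b' - b)) = (u - b) / (b' - b) * (b' - A2)" by simp
  show ?thesis unfolding theta_def eq using k k0 by simp
qed

lemma theta_cont: "continuous_on S (theta b b' A2)"
  unfolding theta_def by (intro continuous_intros)

lemma fcut_eq: "u \<le> b \<or> b' \<le> u \<Longrightarrow> f b = f A2 \<Longrightarrow> b < b' \<Longrightarrow> fcut f b b' A2 u = f u"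
  unfolding fcut_def using theta_b[of b b' A2] theta_b'[of b b' A2] by (auto simp: not_less)

lemma fcut_mid: "b \<le> u \<Longrightarrow> u \<le> b' \<Longrightarrow> fcut f b b' A2 u = f (theta b b' A2 u)"
  unfolding fcut_def by auto

lemma fcut_mono:
  assumes "b < b'" "A2 < b'"
    and "strictly_increasing_on {A2..b'} f \<or> strictly_decreasing_on {A2..b'} f"
  shows "(strictly_increasing_on {A2..b'} f \<longrightarrow> strictly_increasing_on {b..b'} (fcut f b b' A2)) \<and>
         (strictly_decreasing_on {A2..b'} f \<longrightarrow> strictly_decreasing_on {b..b'} (fcut f b b' A2))"
proof -
  have r: "theta b b' A2 u \<in> {A2..b'}" if "u \<in> {b..b'}" for u using theta_range[of b b' A2 u] assms that by auto
  have m: "theta b b' A2 u < theta b b' A2 v" if "u < v" for u v using theta_mono assms that by auto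
  show ?thesis
    unfolding strictly_increasing_on_def strictly_decreasing_on_def
    using r m by (auto simp: fcut_mid)
qed

lemma fcut_cont:
  assumes "continuous_on {0..1} f" "0 \<le> b" "b < b'" "b' \<le> 1" "0 \<le> A2" "A2 \<le> b'" "f b = f A2"
  shows "continuous_on {0..1} (fcut f b b' A2)"
proof -
  let ?g = "fcut f b b' A2"
  have c1: "continuous_on {0..b} ?g"
    using continuous_on_subset[OF assms(1), of "{0..b}"] assms fcut_eq[of _ b b' f A2]
    by (auto intro: continuous_on_eq)
  have c3: "continuous_on {b'..1} ?g"
    using continuous_on_subset[OF assms(1), of "{b'..1}"] assms fcut_eq[of _ b b' f A2]
    by (auto intro: continuous_on_eq)
  have "continuous_on {b..b'} (f \<circ> theta b b' A2)"
  proof (rule continuous_on_compose[OF theta_cont])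
    show "continuous_on (theta b b' A2 ` {b..b'}) f"
      by (rule continuous_on_subset[OF assms(1)]) (use theta_range[of b b' A2] assms in force)
  qed
  hence c2: "continuous_on {b..b'} ?g"
    by (rule continuous_on_eq) (auto simp: fcut_mid)
  have "continuous_on ({0..b} \<union> {b..b'}) ?g"
    by (rule continuous_on_closed_Un[OF _ _ c1 c2]) auto
  then have "continuous_on ({0..b} \<union> {b..b'} \<union> {b'..1}) ?g"
    using continuous_on_closed_Un[of "{0..b} \<union> {b..b'}" "{b'..1}" ?g] c3 by (auto intro: closed_Un)
  moreover have "{0..b} \<union> {b..b'} \<union> {b'..1} = {0..(1::real)}" using assms by auto
  ultimately show ?thesis by simp
qed



lemma fold_reduce:
  fixes f :: "real \<Rightarrow> real"
  assumes cont: "continuous_on {0..1} f"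
    and ord: "0 \<le> b" "b \<le> A1" "A1 < A2" "A2 < b'" "b' \<le> 1"
    and m1: "strictly_increasing_on {b..A1} f \<or> strictly_decreasing_on {b..A1} f"
    and m2: "strictly_increasing_on {A1..A2} f \<or> strictly_decreasing_on {A1..A2} f"
    and m3: "strictly_increasing_on {A2..b'} f \<or> strictly_decreasing_on {A2..b'} f"
    and vals: "f b = f A2" "f b' = f A1"
    and cl: "climbable (fcut f b b' A2)"
  shows "climbable f"
proof -
  let ?g = "fcut f b b' A2"
  define c where "c = f A1"
  define d where "d = f A2"
  define I where "I = {min c d..max c d}"
  have bb': "b < b'" using ord by simp
  have cs: "continuous_on {x..z} f" if "0 \<le> x" "z \<le> 1" for x z
    using cont by (rule continuous_on_subset) (use that in auto)
  have im1: "f ` {b..A1} = I" "inj_on f {b..A1}"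
    using mp_image[OF cs[of b A1] _ m1] ord vals unfolding I_def c_def d_def
    by (auto simp: min.commute max.commute)
  have im2: "f ` {A1..A2} = I" "inj_on f {A1..A2}"
    using mp_image[OF cs[of A1 A2] _ m2] ord vals unfolding I_def c_def d_def by auto
  have im3: "f ` {A2..b'} = I" "inj_on f {A2..b'}"
    using mp_image[OF cs[of A2 b'] _ m3] ord vals unfolding I_def c_def d_def
    by (auto simp: min.commute max.commute)
  have gc: "continuous_on {0..1} ?g" by (rule fcut_cont[OF cont]) (use ord vals in auto)
  have gcs: "continuous_on {b..b'} ?g" using gc by (rule continuous_on_subset) (use ord in auto)
  have gm: "strictly_increasing_on {b..b'} ?g \<or> strictly_decreasing_on {b..b'} ?g"
    using fcut_mono[OF bb' ord(4) m3] m3 by blast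
  have gb: "?g b = d" "?g b' = c"
    using fcut_mid[of b b b' f A2] fcut_mid[of b b' b' f A2] theta_b[of b b' A2] theta_b'[OF bb', of A2] vals ord
    unfolding c_def d_def by auto
  have gim: "?g ` {b..b'} = I" "inj_on ?g {b..b'}"
    using mp_image[OF gcs _ gm] ord gb unfolding I_def by (auto simp: min.commute max.commute)
  define \<phi> where "\<phi> u = (if u \<in> {b..b'} then (SOME y. y \<in> {b..b'} \<and> ?g y = f u) else u)" for u
  have phi_eq: "\<phi> u = y" if "u \<in> {b..b'}" "y \<in> {b..b'}" "?g y = f u" for u y
  proof -
    have "(SOME y. y \<in> {b..b'} \<and> ?g y = f u) = y"
    proof (rule some_equality)
      show "y \<in> {b..b'} \<and> ?g y = f u" using that by auto
      fix y' assume "y' \<in> {b..b'} \<and> ?g y' = f u"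
      thus "y' = y" using gim(2) that unfolding inj_on_def by auto
    qed
    thus ?thesis using that by (simp add: \<phi>_def)
  qed
  have feq: "\<forall>u\<in>{0..1}. f u = ?g (\<phi> u)"
  proof
    fix u :: real assume u: "u \<in> {0..1}"
    show "f u = ?g (\<phi> u)"
    proof (cases "u \<in> {b..b'}")
      case True
      have "u \<in> {b..A1} \<or> u \<in> {A1..A2} \<or> u \<in> {A2..b'}" using True by auto
      hence "f u \<in> I" using im1 im2 im3 by blast
      hence "\<exists>y. y \<in> {b..b'} \<and> ?g y = f u" using gim(1) by (metis imageE)
      hence "(SOME y. y \<in> {b..b'} \<and> ?g y = f u) \<in> {b..b'} \<and> ?g (SOME y. y \<in> {b..b'} \<and> ?g y = f u) = f u"
        by (rule someI_ex)
      moreover have "\<phi> u = (SOME y. y \<in> {b..b'} \<and> ?g y = f u)" using True by (simp add: \<phi>_def)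
      ultimately have "\<phi> u \<in> {b..b'} \<and> ?g (\<phi> u) = f u" by simp
      thus ?thesis by simp
    next
      case False
      hence "u \<le> b \<or> b' \<le> u" by auto
      moreover have "\<phi> u = u" unfolding \<phi>_def by (rule if_not_P[OF False])
      ultimately show ?thesis using fcut_eq[of u b b' f A2] vals bb' by simp
    qed
  qed
  have cb1: "continuous_on {b..A1} f" using cs ord by auto
  have cb2: "continuous_on {A1..A2} f" using cs ord by auto
  note S1 = sect[OF cb1 im1(2)]
  note S2 = sect[OF cb2 im2(2)]
  define \<psi>1 where "\<psi>1 y = (if y \<le> b then y else inv_into {b..A1} f (?g y))" for y
  define \<psi>2 where "\<psi>2 y = inv_into {A1..A2} f (?g y)" for y
  define \<psi>3 where "\<psi>3 y = (if y \<le> b' then theta b b' A2 y else y)" for y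
  have gI: "?g y \<in> I" if "y \<in> {b..b'}" for y using gim(1) that by auto
  have inv1: "inv_into {b..A1} f (?g y) \<in> {b..A1}" "f (inv_into {b..A1} f (?g y)) = ?g y" if "y \<in> {b..b'}" for y
  proof -
    have m: "?g y \<in> f ` {b..A1}" using gI[OF that] im1(1) by auto
    show "inv_into {b..A1} f (?g y) \<in> {b..A1}" using S1(2) m by blast
    show "f (inv_into {b..A1} f (?g y)) = ?g y" using S1(3) m by blast
  qed
  have inv2: "inv_into {A1..A2} f (?g y) \<in> {A1..A2}" "f (inv_into {A1..A2} f (?g y)) = ?g y" if "y \<in> {b..b'}" for y
  proof -
    have m: "?g y \<in> f ` {A1..A2}" using gI[OF that] im2(1) by auto
    show "inv_into {A1..A2} f (?g y) \<in> {A1..A2}" using S2(2) m by blast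
    show "f (inv_into {A1..A2} f (?g y)) = ?g y" using S2(3) m by blast
  qed
  have ia: "inv_into {b..A1} f (?g b) = b" "inv_into {b..A1} f (?g b') = A1"
    "inv_into {A1..A2} f (?g b') = A1" "inv_into {A1..A2} f (?g b) = A2"
  proof -
    have g1: "?g b = f b" "?g b' = f A1" "?g b = f A2" using gb vals unfolding c_def d_def by auto
    show "inv_into {b..A1} f (?g b) = b" unfolding g1(1) using S1(4) ord by auto
    show "inv_into {b..A1} f (?g b') = A1" unfolding g1(2) using S1(4) ord by auto
    show "inv_into {A1..A2} f (?g b') = A1" unfolding g1(2) using S2(4) ord by auto
    show "inv_into {A1..A2} f (?g b) = A2" unfolding g1(3) using S2(4) ord by auto
  qed
  have c1: "continuous_on {0..b'} \<psi>1"
  proof -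
    have "continuous_on {b..b'} (\<lambda>y. inv_into {b..A1} f (?g y))"
      by (rule continuous_on_compose2[OF S1(1) gcs]) (use gim(1) im1(1) in auto)
    hence a: "continuous_on {x \<in> {0..b'}. b \<le> x} (\<lambda>y. inv_into {b..A1} f (?g y))"
      by (rule continuous_on_subset) auto
    have b: "continuous_on {x \<in> {0..b'}. x \<le> b} (\<lambda>y. y)" by (intro continuous_intros)
    show ?thesis unfolding \<psi>1_def
      by (rule continuous_on_cases_le[OF b a]) (use ia in \<open>auto intro: continuous_intros\<close>)
  qed
  have r1: "\<psi>1 ` {0..b'} \<subseteq> {0..1}"
  proof
    fix z assume "z \<in> \<psi>1 ` {0..b'}"
    then obtain y where y: "y \<in> {0..b'}" "z = \<psi>1 y" by auto
    show "z \<in> {0..1}"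
    proof (cases "y \<le> b")
      case True then show ?thesis using y ord by (auto simp: \<psi>1_def)
    next
      case False
      hence "y \<in> {b..b'}" using y by auto
      from inv1(1)[OF this] show ?thesis using y False ord by (auto simp: \<psi>1_def)
    qed
  qed
  have s1: "\<forall>y\<in>{0..b'}. \<phi> (\<psi>1 y) = y"
  proof
    fix y assume y: "y \<in> {0..b'}"
    show "\<phi> (\<psi>1 y) = y"
    proof (cases "y < b")
      case True then show ?thesis by (simp add: \<psi>1_def \<phi>_def)
    next
      case False
      hence yb: "y \<in> {b..b'}" using y by auto
      have "\<psi>1 y = inv_into {b..A1} f (?g y)" using False ia by (cases "y = b") (auto simp: \<psi>1_def)
      moreover have "\<phi> (inv_into {b..A1} f (?g y)) = y"
        by (rule phi_eq) (use inv1[OF yb] yb ord in auto)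
      ultimately show ?thesis by simp
    qed
  qed
  have c2: "continuous_on {b..b'} \<psi>2" unfolding \<psi>2_def
    by (rule continuous_on_compose2[OF S2(1) gcs]) (use gim(1) im2(1) in auto)
  have r2: "\<psi>2 ` {b..b'} \<subseteq> {0..1}"
  proof
    fix z assume "z \<in> \<psi>2 ` {b..b'}"
    then obtain y where y: "y \<in> {b..b'}" "z = \<psi>2 y" by auto
    from inv2(1)[OF y(1)] show "z \<in> {0..1}" using y ord by (auto simp: \<psi>2_def)
  qed
  have s2: "\<forall>y\<in>{b..b'}. \<phi> (\<psi>2 y) = y"
  proof
    fix y assume yb: "y \<in> {b..b'}"
    show "\<phi> (\<psi>2 y) = y" unfolding \<psi>2_def
      by (rule phi_eq) (use inv2[OF yb] yb ord in auto)
  qed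
  have c3: "continuous_on {b..1} \<psi>3"
  proof -
    have a: "continuous_on {x \<in> {b..1}. x \<le> b'} (theta b b' A2)" by (rule theta_cont)
    have b: "continuous_on {x \<in> {b..1}. b' \<le> x} (\<lambda>y. y)" by (intro continuous_intros)
    show ?thesis unfolding \<psi>3_def
      by (rule continuous_on_cases_le[OF a b]) (use theta_b'[OF bb'] in \<open>auto intro: continuous_intros\<close>)
  qed
  have r3: "\<psi>3 ` {b..1} \<subseteq> {0..1}"
  proof
    fix z assume "z \<in> \<psi>3 ` {b..1}"
    then obtain y where y: "y \<in> {b..1}" "z = \<psi>3 y" by auto
    show "z \<in> {0..1}"
    proof (cases "y \<le> b'")
      case True
      then have "theta b b' A2 y \<in> {A2..b'}" using theta_range[OF bb', of A2 y] y ord by auto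
      then show ?thesis using y True ord by (auto simp: \<psi>3_def)
    next
      case False then show ?thesis using y ord by (auto simp: \<psi>3_def)
    qed
  qed
  have s3: "\<forall>y\<in>{b..1}. \<phi> (\<psi>3 y) = y"
  proof
    fix y assume y: "y \<in> {b..1}"
    show "\<phi> (\<psi>3 y) = y"
    proof (cases "y \<le> b'")
      case True
      hence yb: "y \<in> {b..b'}" using y by auto
      have th: "theta b b' A2 y \<in> {A2..b'}" using theta_range[OF bb', of A2 y] yb ord by auto
      have "\<phi> (theta b b' A2 y) = y"
        by (rule phi_eq) (use th yb ord fcut_mid[of b y b' f A2] in auto)
      then show ?thesis using True by (simp add: \<psi>3_def)
    next
      case False then show ?thesis using y by (simp add: \<psi>3_def \<phi>_def)
    qed
  qed
  have e: "\<psi>1 0 = 0" "\<psi>1 b' = \<psi>2 b'" "\<psi>2 b = \<psi>3 b" "\<psi>3 1 = 1"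
    using ia ord bb' theta_b[of b b' A2] theta_b'[OF bb', of A2] by (auto simp: \<psi>1_def \<psi>2_def \<psi>3_def)
  have clphi: "climbable \<phi>"
    unfolding climbable_def
  proof (intro allI impI)
    fix q :: "real \<Rightarrow> real"
    assume q: "continuous_on {0..1} q" "q ` {0..1} \<subseteq> {0..1}" "q 0 = 0" "q 1 = 1"
    show "path_component (Sset \<phi> q) (0,0) (1,1)"
      by (rule zlemma[OF _ bb' _ c1 r1 s1 c2 r2 s2 c3 r3 s3 e q]) (use ord in auto)
  qed
  show ?thesis by (rule climbable_comp[OF cl clphi feq])
qed



lemma minimal_case:
  fixes f :: "real \<Rightarrow> real"
  assumes pm: "pm k a f" and minimal: "\<forall>k'<k. \<not>(\<exists>a. pm k' a f)"
    and cont: "continuous_on {0..1} f" and rng: "f ` {0..1} \<subseteq> {0..1}" and f0: "f 0 = 0" and f1: "f 1 = 1"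
    and IH: "\<And>f' a'. pm (k - 2) a' f' \<Longrightarrow> continuous_on {0..1} f' \<Longrightarrow> f' ` {0..1} \<subseteq> {0..1} \<Longrightarrow> f' 0 = 0 \<Longrightarrow> f' 1 = 1 \<Longrightarrow> climbable f'"
  shows "climbable f"
proof -
  define INC where "INC j \<longleftrightarrow> strictly_increasing_on {a j..a (Suc j)} f" for j
  define DEC where "DEC j \<longleftrightarrow> strictly_decreasing_on {a j..a (Suc j)} f" for j
  have A: "a 0 = 0" "a k = 1" "\<And>j. j < k \<Longrightarrow> a j < a (Suc j)" "\<And>j. j < k \<Longrightarrow> INC j \<or> DEC j"
    using pm unfolding pm_def INC_def DEC_def by auto
  have k0: "k \<noteq> 0" using A(1,2) by (cases k) auto
  have fr: "0 \<le> f u \<and> f u \<le> 1" if "u \<in> {0..1}" for u using rng that by (auto simp: image_subset_iff)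
  have ar: "a i \<in> {0..1}" if "i \<le> k" for i using pm_range[OF pm that] .
  have vinc: "f (a j) < f (a (Suc j))" if "j < k" "INC j" for j
    using that A(3)[OF that(1)] unfolding INC_def strictly_increasing_on_def by auto
  have vdec: "f (a j) > f (a (Suc j))" if "j < k" "DEC j" for j
    using that A(3)[OF that(1)] unfolding DEC_def strictly_decreasing_on_def by auto
  have nb: "\<not> (INC j \<and> DEC j)" if "j < k" for j using vinc vdec that by fastforce
  have alt0: "\<not> (INC j \<and> INC (Suc j)) \<and> \<not> (DEC j \<and> DEC (Suc j))" if "Suc j < k" for j
  proof -
    have "\<not> pm (k - 1) (\<lambda>i. if i \<le> j then a i else a (Suc i)) f" using minimal k0 by auto
    thus ?thesis using pm_merge[OF pm that] unfolding INC_def DEC_def by blast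
  qed
  have alt: "INC j \<longleftrightarrow> DEC (Suc j)" "INC (Suc j) \<longleftrightarrow> DEC j" if "Suc j < k" for j
    using alt0[OF that] A(4)[of j] A(4)[of "Suc j"] nb[of j] nb[of "Suc j"] that by auto
  have first: "INC 0"
  proof (rule ccontr)
    assume "\<not> INC 0"
    hence "DEC 0" using A(4) k0 by auto
    hence "f (a 1) < f 0" using vdec[of 0] k0 A(1) by auto
    moreover have "0 \<le> f (a 1)" using fr ar[of 1] k0 by auto
    ultimately show False using f0 by simp
  qed
  have last: "INC (k - 1)"
  proof (rule ccontr)
    assume "\<not> INC (k - 1)"
    moreover have "INC (k - 1) \<or> DEC (k - 1)" using A(4)[of "k - 1"] k0 by simp
    ultimately have "DEC (k - 1)" by simp
    hence "f (a (k - 1)) > f 1" using vdec[of "k - 1"] k0 A(2) by auto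
    moreover have "f (a (k - 1)) \<le> 1" using fr ar[of "k - 1"] by auto
    ultimately show False using f1 by simp
  qed
  consider "k = 1" | "k = 2" | "k \<ge> 3" using k0 by linarith
  then show ?thesis
  proof cases
    case 1
    have "strictly_increasing_on {0..1} f" using first A(1,2) 1 unfolding INC_def by simp
    then show ?thesis using climbable_inc cont f0 f1 by blast
  next
    case 2
    have "INC 1" using last 2 by simp
    moreover have "DEC 1" using alt(1)[of 0] first 2 by simp
    ultimately show ?thesis using nb[of 1] 2 by simp
  next
    case 3
    define span where "span i = \<bar>f (a i) - f (a (Suc i))\<bar>" for i
    define J where "J = {1..k-2}"
    have Jf: "finite J" "J \<noteq> {}" using 3 by (auto simp: J_def)
    have "Min (span ` J) \<in> span ` J" using Jf by simp
    then obtain j where j: "j \<in> J" "span j = Min (span ` J)" by auto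
    have jmin: "span j \<le> span i" if "i \<in> J" for i using j(2) Jf that by simp
    have j1: "1 \<le> j" "Suc (Suc j) \<le> k" using j(1) 3 by (auto simp: J_def)
    define A0 where "A0 = a (j - 1)"
    define A1 where "A1 = a j"
    define A2 where "A2 = a (Suc j)"
    define A3 where "A3 = a (Suc (Suc j))"
    have sj: "Suc (j - 1) = j" using j1 by simp
    have ord: "A0 < A1" "A1 < A2" "A2 < A3" "0 \<le> A0" "A3 \<le> 1"
      using A(3)[of "j-1"] A(3)[of j] A(3)[of "Suc j"] j1 sj ar[of "j-1"] ar[of "Suc (Suc j)"]
      unfolding A0_def A1_def A2_def A3_def by auto
    have altj: "INC j \<longleftrightarrow> DEC (Suc j)" "INC (Suc j) \<longleftrightarrow> DEC j" using alt[of j] j1 by auto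
    have altj1: "INC (j - 1) \<longleftrightarrow> DEC j" "INC j \<longleftrightarrow> DEC (j - 1)" using alt[of "j - 1"] j1 sj by auto
    have pj: "INC (j - 1) \<or> DEC (j - 1)" "INC j \<or> DEC j" "INC (Suc j) \<or> DEC (Suc j)"
      using A(4)[of "j - 1"] A(4)[of j] A(4)[of "Suc j"] j1 by auto
    have vj1: "INC (j - 1) \<Longrightarrow> f A0 < f A1" "DEC (j - 1) \<Longrightarrow> f A0 > f A1"
      using vinc[of "j - 1"] vdec[of "j - 1"] j1 sj unfolding A0_def A1_def by auto
    have vj: "INC j \<Longrightarrow> f A1 < f A2" "DEC j \<Longrightarrow> f A1 > f A2"
      using vinc[of j] vdec[of j] j1 unfolding A1_def A2_def by auto
    have vj2: "INC (Suc j) \<Longrightarrow> f A2 < f A3" "DEC (Suc j) \<Longrightarrow> f A2 > f A3"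
      using vinc[of "Suc j"] vdec[of "Suc j"] j1 unfolding A2_def A3_def by auto
    have N1: "min (f A0) (f A1) \<le> f A2 \<and> f A2 \<le> max (f A0) (f A1)"
    proof (cases "j = 1")
      case True
      have "DEC j" using altj1(1) first True by simp
      moreover have "0 \<le> f A2" using fr ar[of "Suc j"] j1 unfolding A2_def by auto
      moreover have "f A0 = 0" using True A(1) f0 unfolding A0_def by simp
      ultimately show ?thesis using vj by auto
    next
      case False
      hence "j - 1 \<in> J" using j1 j(1) by (auto simp: J_def)
      hence sp: "span j \<le> span (j - 1)" by (rule jmin)
      hence sp': "\<bar>f A1 - f A2\<bar> \<le> \<bar>f A0 - f A1\<bar>" unfolding span_def A0_def A1_def A2_def using sj by simp
      show ?thesis
      proof (cases "INC (j - 1)")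
        case True
        then show ?thesis using altj1 vj1 vj sp' by auto
      next
        case False
        then show ?thesis using altj1 vj1 vj sp' pj by auto
      qed
    qed
    have N2: "min (f A2) (f A3) \<le> f A1 \<and> f A1 \<le> max (f A2) (f A3)"
    proof (cases "Suc (Suc j) = k")
      case True
      have "INC (Suc j)" using last True by (metis diff_Suc_1)
      hence "DEC j" using altj by simp
      moreover have "f A1 \<le> 1" using fr ar[of j] j1 unfolding A1_def by auto
      moreover have "f A3 = 1" using True A(2) f1 unfolding A3_def by simp
      ultimately show ?thesis using vj by auto
    next
      case False
      hence "Suc j \<in> J" using j1 by (auto simp: J_def)
      hence sp: "span j \<le> span (Suc j)" by (rule jmin)
      hence sp': "\<bar>f A1 - f A2\<bar> \<le> \<bar>f A2 - f A3\<bar>" unfolding span_def A1_def A2_def A3_def by simp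
      show ?thesis
      proof (cases "INC j")
        case True
        then show ?thesis using altj vj vj2 sp' by auto
      next
        case False
        then show ?thesis using altj vj vj2 sp' pj by auto
      qed
    qed
    have cs: "continuous_on {x..z} f" if "0 \<le> x" "z \<le> 1" for x z
      using cont by (rule continuous_on_subset) (use that in auto)
    obtain b where b: "b \<in> {A0..A1}" "f b = f A2"
      using ivt_between[OF cs[of A0 A1] _ _] N1 ord by (metis less_imp_le order.trans)
    obtain b' where b': "b' \<in> {A2..A3}" "f b' = f A1"
      using ivt_between[OF cs[of A2 A3] _ _] N2 ord by (metis less_imp_le order.trans)
    have b'A2: "A2 < b'"
    proof (rule ccontr)
      assume "\<not> A2 < b'"
      hence "b' = A2" using b' by auto
      thus False using b' pj(2) vj by auto
    qed
    have piece: "strictly_increasing_on {x..z} f \<or> strictly_decreasing_on {x..z} f"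
      if "INC i \<or> DEC i" "a i \<le> x" "z \<le> a (Suc i)" for i x z
      using that inc_subset[of "{a i..a (Suc i)}" f "{x..z}"] dec_subset[of "{a i..a (Suc i)}" f "{x..z}"]
      unfolding INC_def DEC_def by auto
    have m1: "strictly_increasing_on {b..A1} f \<or> strictly_decreasing_on {b..A1} f"
      using piece[OF pj(1)] b sj unfolding A0_def A1_def by auto
    have m2: "strictly_increasing_on {A1..A2} f \<or> strictly_decreasing_on {A1..A2} f"
      using piece[OF pj(2)] unfolding A1_def A2_def by auto
    have m3: "strictly_increasing_on {A2..b'} f \<or> strictly_decreasing_on {A2..b'} f"
      using piece[OF pj(3)] b' unfolding A2_def A3_def by auto
    let ?g = "fcut f b b' A2"
    have bb': "b < b'" using b b' ord by auto
    have geq: "?g u = f u" if "u \<le> b \<or> b' \<le> u" for u using fcut_eq[OF that b(2) bb'] .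
    have gc: "continuous_on {0..1} ?g" by (rule fcut_cont[OF cont]) (use b b' b'A2 ord in auto)
    have grng: "?g ` {0..1} \<subseteq> {0..1}"
    proof
      fix z assume "z \<in> ?g ` {0..1}"
      then obtain u where u: "u \<in> {0..1}" "z = ?g u" by auto
      show "z \<in> {0..1}"
      proof (cases "b \<le> u \<and> u \<le> b'")
        case True
        have "theta b b' A2 u \<in> {A2..b'}" using theta_range[OF bb', of A2 u] True b'A2 by auto
        hence "theta b b' A2 u \<in> {0..1}" using b' ord by auto
        moreover have "?g u = f (theta b b' A2 u)" using True fcut_mid[of b u b' f A2] by simp
        ultimately show ?thesis using fr u(2) by simp
      next
        case False
        hence "?g u = f u" by (intro geq) auto
        then show ?thesis using fr[OF u(1)] u(2) by simp
      qed
    qed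
    have g01: "?g 0 = 0" "?g 1 = 1" using geq[of 0] geq[of 1] b b' ord f0 f1 by auto
    define a'' where "a'' i = (if i < j then a i else a (i + 2))" for i
    have pm'': "pm (k - 2) a'' ?g"
      unfolding pm_def
    proof (intro conjI allI impI)
      show "a'' 0 = 0" using j1 A(1) by (simp add: a''_def)
      have "Suc (Suc (k - 2)) = k" "\<not> k - 2 < j" using j1 by arith+
      then show "a'' (k - 2) = 1" using A(2) by (simp add: a''_def)
    next
      fix i assume i: "i < k - 2"
      show "a'' i < a'' (Suc i)"
      proof (cases "i < j - 1")
        case True then show ?thesis using A(3)[of i] j1 by (auto simp: a''_def)
      next
        case False
        show ?thesis
        proof (cases "i = j - 1")
          case True
          then have "a'' i = A0" "a'' (Suc i) = A3" using j1 sj by (auto simp: a''_def A0_def A3_def)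
          then show ?thesis using ord by simp
        next
          case False2: False
          then show ?thesis using A(3)[of "i + 2"] i False by (auto simp: a''_def)
        qed
      qed
    next
      fix i assume i: "i < k - 2"
      show "strictly_increasing_on {a'' i..a'' (Suc i)} ?g \<or> strictly_decreasing_on {a'' i..a'' (Suc i)} ?g"
      proof (cases "i < j - 1")
        case True
        have e: "a'' i = a i" "a'' (Suc i) = a (Suc i)" using True by (auto simp: a''_def)
        have "a (Suc i) \<le> A0" using pm_le[OF pm, of "Suc i" "j - 1"] True j1 unfolding A0_def by auto
        hence eq: "\<forall>u\<in>{a i..a (Suc i)}. ?g u = f u" using geq b by auto
        have "INC i \<or> DEC i" using A(4)[of i] i by auto
        then show ?thesis unfolding e using inc_cong[OF _ eq] dec_cong[OF _ eq] unfolding INC_def DEC_def by blast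
      next
        case False
        show ?thesis
        proof (cases "i = j - 1")
          case True
          then have e: "a'' i = A0" "a'' (Suc i) = A3" using j1 sj by (auto simp: a''_def A0_def A3_def)
          have eq1: "\<forall>u\<in>{A0..b}. ?g u = f u" using geq by auto
          have eq3: "\<forall>u\<in>{b'..A3}. ?g u = f u" using geq by auto
          have sub1: "{A0..b} \<subseteq> {a (j - 1)..a (Suc (j - 1))}" using b sj unfolding A0_def A1_def by auto
          have sub3: "{b'..A3} \<subseteq> {a (Suc j)..a (Suc (Suc j))}" "{A2..b'} \<subseteq> {a (Suc j)..a (Suc (Suc j))}"
            using b' unfolding A2_def A3_def by auto
          show ?thesis unfolding e
          proof (cases "INC (j - 1)")
            case True
            hence I3: "INC (Suc j)" using altj altj1 by auto
            have "strictly_increasing_on {A0..b} ?g"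
              using inc_cong[OF inc_subset[OF True[unfolded INC_def] sub1] eq1] .
            moreover have "strictly_increasing_on {b..b'} ?g"
              using fcut_mono[OF bb' b'A2 m3] inc_subset[OF I3[unfolded INC_def] sub3(2)] by blast
            moreover have "strictly_increasing_on {b'..A3} ?g"
              using inc_cong[OF inc_subset[OF I3[unfolded INC_def] sub3(1)] eq3] .
            ultimately show "strictly_increasing_on {A0..A3} ?g \<or> strictly_decreasing_on {A0..A3} ?g"
              using inc_join by blast
          next
            case False
            hence D1: "DEC (j - 1)" using pj by auto
            hence D3: "DEC (Suc j)" using altj altj1 pj nb j1 by auto
            have "strictly_decreasing_on {A0..b} ?g"
              using dec_cong[OF dec_subset[OF D1[unfolded DEC_def] sub1] eq1] .
            moreover have "strictly_decreasing_on {b..b'} ?g"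
              using fcut_mono[OF bb' b'A2 m3] dec_subset[OF D3[unfolded DEC_def] sub3(2)] by blast
            moreover have "strictly_decreasing_on {b'..A3} ?g"
              using dec_cong[OF dec_subset[OF D3[unfolded DEC_def] sub3(1)] eq3] .
            ultimately show "strictly_increasing_on {A0..A3} ?g \<or> strictly_decreasing_on {A0..A3} ?g"
              using dec_join by blast
          qed
        next
          case False2: False
          hence ij: "j \<le> i" using False by auto
          have e: "a'' i = a (i + 2)" "a'' (Suc i) = a (Suc (i + 2))" using ij by (auto simp: a''_def)
          have "A3 \<le> a (i + 2)" using pm_le[OF pm, of "Suc (Suc j)" "i + 2"] ij i unfolding A3_def by auto
          hence eq: "\<forall>u\<in>{a (i + 2)..a (Suc (i + 2))}. ?g u = f u" using geq b' by auto
          have "INC (i + 2) \<or> DEC (i + 2)" using A(4)[of "i + 2"] i by auto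
          then show ?thesis unfolding e using inc_cong[OF _ eq] dec_cong[OF _ eq] unfolding INC_def DEC_def by blast
        qed
      qed
    qed
    have clg: "climbable ?g" by (rule IH[OF pm'' gc grng g01])
    show ?thesis
      by (rule fold_reduce[OF cont _ _ _ b'A2 _ m1 m2 m3 b(2) b'(2) clg]) (use b b' ord in auto)
  qed
qed

lemma L_pm: "pm k a f \<Longrightarrow> continuous_on {0..1} f \<Longrightarrow> f ` {0..1} \<subseteq> {0..1} \<Longrightarrow> f 0 = 0 \<Longrightarrow> f 1 = 1 \<Longrightarrow> climbable f"
proof (induction k arbitrary: a f rule: less_induct)
  case (less k)
  define k0 where "k0 = (LEAST k'. \<exists>a. pm k' a f)"
  have ex: "\<exists>a. pm k0 a f" unfolding k0_def by (rule LeastI) (use less.prems(1) in blast)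
  then obtain a0 where a0: "pm k0 a0 f" by blast
  have le: "k0 \<le> k" unfolding k0_def by (rule Least_le) (use less.prems(1) in blast)
  have minimal: "\<forall>k'<k0. \<not>(\<exists>a. pm k' a f)" unfolding k0_def using not_less_Least by blast
  have k0pos: "k0 \<noteq> 0" using a0 unfolding pm_def by (cases k0) auto
  show ?case
  proof (rule minimal_case[OF a0 minimal less.prems(2-5)])
    fix f' a' assume "pm (k0 - 2) a' f'" "continuous_on {0..1} f'" "f' ` {0..1} \<subseteq> {0..1}" "f' 0 = 0" "f' 1 = 1"
    moreover have "k0 - 2 < k" using le k0pos by linarith
    ultimately show "climbable f'" using less.IH by blast
  qed
qed

lemma L: "piecewise_monotone f \<Longrightarrow> continuous_on {0..1} f \<Longrightarrow> f ` {0..1} \<subseteq> {0..1} \<Longrightarrow> f 0 = 0 \<Longrightarrow> f 1 = 1 \<Longrightarrow> climbable f"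
proof -
  assume "piecewise_monotone f" "continuous_on {0..1} f" "f ` {0..1} \<subseteq> {0..1}" "f 0 = 0" "f 1 = 1"
  then obtain k a where "pm k a f" unfolding piecewise_monotone_pm by blast
  with L_pm show "climbable f" using \<open>continuous_on {0..1} f\<close> \<open>f ` {0..1} \<subseteq> {0..1}\<close> \<open>f 0 = 0\<close> \<open>f 1 = 1\<close> by blast
qed

lemma chain:
  fixes g h :: "real \<Rightarrow> real"
  assumes ch: "climbable h" and cg: "continuous_on {0..1} g" "g ` {0..1} \<subseteq> {0..1}" "g 0 = 0" "g 1 = 1"
    and chh: "continuous_on {0..1} h" "h ` {0..1} \<subseteq> {0..1}" "h 0 = 0" "h 1 = 1"
  shows "\<exists>s::nat \<Rightarrow> real \<Rightarrow> real. (\<forall>i\<in>{1..Suc m}. continuous_on {0..1} (s i) \<and> s i ` {0..1} \<subseteq> {0..1} \<and> s i 0 = 0)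
     \<and> s (Suc m) 1 = 1 \<and> (\<forall>i\<in>{2..Suc m}. \<forall>t\<in>{0..1}. h (s i t) = g (s (i - 1) t) + h (s 1 t))"
proof (induction m)
  case 0
  show ?case by (rule exI[of _ "\<lambda>i t. t"]) auto
next
  case (Suc m)
  define M where "M = Suc m"
  from Suc.IH obtain s :: "nat \<Rightarrow> real \<Rightarrow> real" where
    s1: "\<forall>i\<in>{1..M}. continuous_on {0..1} (s i) \<and> s i ` {0..1} \<subseteq> {0..1} \<and> s i 0 = 0"
    and s2: "s M 1 = 1" and s3: "\<forall>i\<in>{2..M}. \<forall>t\<in>{0..1}. h (s i t) = g (s (i - 1) t) + h (s 1 t)"
    unfolding M_def by blast
  have M1: "1 \<le> M" by (simp add: M_def)
  have sM: "continuous_on {0..1} (s M)" "s M ` {0..1} \<subseteq> {0..1}" "s M 0 = 0" using s1 M1 by auto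
  have sO: "continuous_on {0..1} (s 1)" "s 1 ` {0..1} \<subseteq> {0..1}" "s 1 0 = 0" using s1 M1 by auto
  define p where "p r = g (s M r) + h (s 1 r)" for r
  have cp: "continuous_on {0..1} p" unfolding p_def
    by (intro continuous_intros continuous_on_compose2[OF cg(1) sM(1) sM(2)] continuous_on_compose2[OF chh(1) sO(1) sO(2)])
  have p0: "p 0 = 0" using sM sO cg chh by (simp add: p_def)
  have pge: "0 \<le> p r" if "r \<in> {0..1}" for r
  proof -
    have "s M r \<in> {0..1}" "s 1 r \<in> {0..1}" using sM sO that by (auto simp: image_subset_iff)
    hence "g (s M r) \<in> {0..1}" "h (s 1 r) \<in> {0..1}" using cg(2) chh(2) by (auto simp: image_subset_iff)
    thus ?thesis by (simp add: p_def)
  qed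
  have p1: "p 1 \<ge> 1" using pge[of 1] s2 cg(4) sO chh(2) by (auto simp: p_def image_subset_iff)
  obtain T where T: "T \<in> {0..1}" "p T \<ge> 1" "\<forall>y\<in>{0..<T}. p y < 1"
    using exists_min_ge[OF cp, of 1 1] p1 by auto
  have cpT: "continuous_on {0..T} p" using cp by (rule continuous_on_subset) (use T in auto)
  obtain x where x: "0 \<le> x" "x \<le> T" "p x = 1" using IVT'[of p 0 1 T] p0 T cpT by auto
  have pT: "p T = 1" using x T by (metis atLeastLessThan_iff le_less less_irrefl)
  have T0: "T > 0" using pT p0 T by (cases "T = 0") auto
  define q where "q v = p (T * v)" for v
  have Tv: "T * v \<in> {0..1}" if "v \<in> {0..1}" for v
    using that T by (auto simp: mult_le_one)
  have cq: "continuous_on {0..1} q" unfolding q_def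
    by (rule continuous_on_compose2[OF cp]) (auto intro: continuous_intros Tv)
  have qr: "q ` {0..1} \<subseteq> {0..1}"
  proof
    fix z assume "z \<in> q ` {0..1}"
    then obtain v where v: "v \<in> {0..1}" "z = q v" by auto
    have "p (T * v) \<le> 1"
    proof (cases "T * v < T")
      case True then show ?thesis using bspec[OF T(3), of "T * v"] Tv[OF v(1)] by auto
    next
      case False then have "T * v = T" using v T0 by (auto simp: mult_le_cancel_left1)
      then show ?thesis using pT by (metis order_refl)
    qed
    thus "z \<in> {0..1}" using pge[OF Tv[OF v(1)]] v by (simp add: q_def)
  qed
  have q0: "q 0 = 0" "q 1 = 1" using p0 pT by (auto simp: q_def)
  have "path_component (Sset h q) (0,0) (1,1)" using ch cq qr q0 unfolding climbable_def by blast
  then obtain G :: "real \<Rightarrow> real \<times> real" where G: "continuous_on {0..1} G" "\<forall>r\<in>{0..1}. G r \<in> Sset h q" "G 0 = (0,0)" "G 1 = (1,1)"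
    by (rule path_component_SsetE)
  have Gm: "fst (G r) \<in> {0..1}" "snd (G r) \<in> {0..1}" "h (fst (G r)) = q (snd (G r))" if "r \<in> {0..1}" for r
  proof -
    obtain a b where ab: "G r = (a,b)" by (cases "G r")
    have "G r \<in> Sset h q" using G(2) that by blast
    thus "fst (G r) \<in> {0..1}" "snd (G r) \<in> {0..1}" "h (fst (G r)) = q (snd (G r))" using ab by (auto simp: Sset_def)
  qed
  define s' where "s' i r = (if i = Suc M then fst (G r) else s i (T * snd (G r)))" for i r
  have cfst: "continuous_on {0..1} (\<lambda>r. fst (G r))" using G(1) by (intro continuous_intros)
  have csnd: "continuous_on {0..1} (\<lambda>r. T * snd (G r))" using G(1) by (intro continuous_intros)
  have tau: "T * snd (G r) \<in> {0..1}" if "r \<in> {0..1}" for r using Tv Gm that by blast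
  show ?case unfolding M_def[symmetric]
  proof (intro exI[of _ s'] conjI; (intro ballI)?)
    fix i assume i: "i \<in> {1..Suc M}"
    show "continuous_on {0..1} (s' i) \<and> s' i ` {0..1} \<subseteq> {0..1} \<and> s' i 0 = 0"
    proof (cases "i = Suc M")
      case True
      then show ?thesis using cfst Gm G(3) by (auto simp: s'_def image_subset_iff)
    next
      case False
      then have iM: "i \<in> {1..M}" using i by auto
      have si: "continuous_on {0..1} (s i)" "s i ` {0..1} \<subseteq> {0..1}" "s i 0 = 0" using s1 iM by auto
      have "continuous_on {0..1} (\<lambda>r. s i (T * snd (G r)))"
        by (rule continuous_on_compose2[OF si(1) csnd]) (use tau in auto)
      moreover have "s' i = (\<lambda>r. s i (T * snd (G r)))" using False by (auto simp: s'_def)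
      ultimately show ?thesis using si tau G(3) by (auto simp: image_subset_iff)
    qed
  next
    show "s' (Suc M) 1 = 1" using G(4) by (simp add: s'_def)
  next
    fix i :: nat and t :: real assume i: "i \<in> {2..Suc M}" and t: "t \<in> {0..1}"
    show "h (s' i t) = g (s' (i - 1) t) + h (s' 1 t)"
    proof (cases "i = Suc M")
      case True
      have "h (s' i t) = q (snd (G t))" using True Gm[OF t] by (simp add: s'_def)
      also have "\<dots> = g (s M (T * snd (G t))) + h (s 1 (T * snd (G t)))" by (simp add: q_def p_def)
      finally show ?thesis using True M1 by (simp add: s'_def)
    next
      case False
      then have "i \<in> {2..M}" using i by auto
      then show ?thesis using s3 tau[OF t] False by (auto simp: s'_def)
    qed
  qed
qed

theorem proposition1:
  fixes \<gamma> :: "real \<Rightarrow> real \<times> real" and n :: nat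
  assumes "continuous_on {0..1} \<gamma>"
    and "\<gamma> ` {0..1} \<subseteq> {0..1} \<times> {0..1}"
    and "\<gamma> 0 = (0, 0)" and "\<gamma> 1 = (1, 1)"
    and "snd \<circ> \<gamma> \<in> class_U"
    and "n \<ge> 1"
  shows "\<exists>(y::real \<Rightarrow> real) (x::nat \<Rightarrow> real \<Rightarrow> real).
           x 0 = (\<lambda>t. 0) \<and>
           continuous_on {0..1} y \<and> y ` {0..1} \<subseteq> {0..1} \<and>
           (\<forall>i\<in>{1..n}. continuous_on {0..1} (x i) \<and> x i ` {0..1} \<subseteq> {0..1}) \<and>
           (\<forall>t\<in>{0..1}. \<forall>i\<in>{1..n}. (x i t, x (i - 1) t + y t) \<in> \<gamma> ` {0..1}) \<and>
           (\<forall>i\<in>{1..n}. x i 0 = 0) \<and> y 0 = 0 \<and>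
           (x n 1, x (n - 1) 1 + y 1) = (1, 1)"
proof -
  define g where "g t = fst (\<gamma> t)" for t
  define h where "h t = snd (\<gamma> t)" for t
  have gam: "\<gamma> t = (g t, h t)" for t by (simp add: g_def h_def)
  have cg: "continuous_on {0..1} g" "g ` {0..1} \<subseteq> {0..1}" "g 0 = 0" "g 1 = 1"
    using assms(1-4) unfolding g_def by (auto intro: continuous_intros simp: image_subset_iff mem_Times_iff)
  have ch: "continuous_on {0..1} h" "h ` {0..1} \<subseteq> {0..1}" "h 0 = 0" "h 1 = 1"
    using assms(1-4) unfolding h_def by (auto intro: continuous_intros simp: image_subset_iff mem_Times_iff)
  have "snd \<circ> \<gamma> = h" by (auto simp: h_def)
  hence "piecewise_monotone h" using assms(5) by (auto simp: class_U_def)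
  hence clh: "climbable h" using L ch by blast
  obtain m where m: "n = Suc m" using assms(6) by (cases n) auto
  obtain s :: "nat \<Rightarrow> real \<Rightarrow> real" where
    s1: "\<forall>i\<in>{1..n}. continuous_on {0..1} (s i) \<and> s i ` {0..1} \<subseteq> {0..1} \<and> s i 0 = 0"
    and s2: "s n 1 = 1" and s3: "\<forall>i\<in>{2..n}. \<forall>t\<in>{0..1}. h (s i t) = g (s (i - 1) t) + h (s 1 t)"
    using chain[OF clh cg ch, of m] m by blast
  have s1': "continuous_on {0..1} (s 1)" "s 1 ` {0..1} \<subseteq> {0..1}" "s 1 0 = 0" using s1 assms(6) by auto
  define y where "y t = h (s 1 t)" for t
  define x where "x i t = (if i = 0 then 0 else g (s i t))" for i t
  show ?thesis
  proof (intro exI[of _ y] exI[of _ x] conjI ballI)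
    show "x 0 = (\<lambda>t. 0)" by (auto simp: x_def)
    show "continuous_on {0..1} y" unfolding y_def by (rule continuous_on_compose2[OF ch(1) s1'(1) s1'(2)])
    show "y ` {0..1} \<subseteq> {0..1}" using s1'(2) ch(2) by (auto simp: y_def image_subset_iff)
    show "y 0 = 0" using s1' ch by (simp add: y_def)
  next
    fix i assume i: "i \<in> {1..n}"
    have si: "continuous_on {0..1} (s i)" "s i ` {0..1} \<subseteq> {0..1}" "s i 0 = 0" using s1 i by auto
    have xi: "x i = (\<lambda>t. g (s i t))" using i by (auto simp: x_def)
    show "continuous_on {0..1} (x i)"
      unfolding xi using continuous_on_compose2[OF cg(1) si(1) si(2)] by simp
    show "x i ` {0..1} \<subseteq> {0..1}"
      unfolding xi using si(2) cg(2) by (auto simp: image_subset_iff)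
    show "x i 0 = 0" using xi si cg by simp
  next
    fix t :: real and i :: nat assume t: "t \<in> {0..1}" and i: "i \<in> {1..n}"
    have st: "s i t \<in> {0..1}" using s1 i t by (auto simp: image_subset_iff)
    show "(x i t, x (i - 1) t + y t) \<in> \<gamma> ` {0..1}"
    proof (cases "i = 1")
      case True
      then have "(x i t, x (i - 1) t + y t) = \<gamma> (s i t)" by (simp add: x_def y_def gam)
      then show ?thesis using st by auto
    next
      case False
      then have "i \<in> {2..n}" using i by auto
      then have "(x i t, x (i - 1) t + y t) = \<gamma> (s i t)" using s3 t False i by (auto simp: x_def y_def gam)
      then show ?thesis using st by auto
    qed
  next
    show "(x n 1, x (n - 1) 1 + y 1) = (1, 1)"
    proof (cases "n = 1")
      case True
      then show ?thesis using s2 cg ch by (simp add: x_def y_def)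
    next
      case False
      then have "n \<in> {2..n}" using assms(6) by auto
      then have "h (s n 1) = g (s (n - 1) 1) + h (s 1 1)" using s3 by auto
      then show ?thesis using s2 cg ch False assms(6) by (simp add: x_def y_def)
    qed
  qed
qed


end
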